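(* Any staircase shape $S$ on $n$ nodes whose number of turning points is bounded by a constant can be grown from a single node in $O(\log n)$ time steps, both in the connectivity graph model and in the adjacency graph model.
   Context: Shapes. Grid points are integer pairs $(x,y)$; two grid points are adjacent if they are at orthogonal (Manhattan) distance $1$. A shape $S=(V,E)$ is a finite connected graph whose nodes occupy distinct grid points and whose edges join only pairs of nodes occupying adjacent points; shapes are considered up to translation, and $n=|V|$. The adjacency closure $AC(S)$ is obtained from $S$ by adding an edge between every pair of adjacent nodes that are not yet joined. Growth operations. One node, the anchor $u_0$, is stationary; other nodes move relative to it. A growth operation on a node $u$ toward an adjacent grid point $p$ either (i) if $u$ has no edge to $p$, creates a new node $u'$ at $p$ with edge $uu'$; or (ii) if $p$ is occupied by a node $v$ with $uv\in E$, creates a new node $u'$ at $p$, replaces edge $uv$ by edges $uu',u'v$, and translates by one unit, along the axis of $uv$, the part of a spanning tree rooted at $u_0$ hanging from whichever of $u,v$ is farther from $u_0$, away from the other endpoint. In one time step a set of operations is applied concurrently, each node receiving at most one operation and all operations having the same cardinal direction; the displacement of each node is the sum of the unit vectors contributed by the operations on its path to $u_0$. The set is collision-free if no two nodes collide during these motions or end at the same point, and no cycle is distorted (displacements along the two paths of any cycle between two of its nodes agree). Growth processes. A growth process from $S_1^b=S_0$ applies in each time step $t$ a collision-free set of operations to $S_t^b$ obtaining $S_t^e$ (deleting no edges). In the connectivity graph model $S_{t+1}^b=S_t^e$; in the adjacency graph model $S_{t+1}^b=AC(S_t^e)$. It grows $S$ in $t_f$ steps if the shape after step $t_f$ is $S$.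 For a path, a node is a turning point if it is an endpoint or its two path-neighbors form a right angle at it. A staircase is a path whose turning points, ordered from one endpoint to the other, alternate between two clockwise- (or counterclockwise-) consecutive cardinal directions. *)

theory Defs
  imports "HOL-Analysis.Analysis"
begin

text \<open>Grid points, shapes (nodes identified with the grid points they occupy;
  edges are 2-element sets of points).\<close>

type_synonym pt = "int \<times> int"
type_synonym shape = "pt set \<times> pt set set"

definition gadj :: "pt \<Rightarrow> pt \<Rightarrow> bool" where
  "gadj p q \<longleftrightarrow> \<bar>fst p - fst q\<bar> + \<bar>snd p - snd q\<bar> = 1"

definition cardinal_dirs :: "pt set" where
  "cardinal_dirs = {(1,0), (-1,0), (0,1), (0,-1)}"

definition is_shape :: "shape \<Rightarrow> bool" where
  "is_shape S \<longleftrightarrow> (let V = fst S; E = snd S in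
     finite V \<and> V \<noteq> {} \<and>
     (\<forall>e\<in>E. \<exists>x y. e = {x,y} \<and> x \<in> V \<and> y \<in> V \<and> gadj x y) \<and>
     (\<forall>x\<in>V. \<forall>y\<in>V. (x,y) \<in> {(a,b). {a,b} \<in> E}\<^sup>*))"

definition AC :: "shape \<Rightarrow> shape" where
  "AC S = (fst S, snd S \<union> {{x,y} | x y. x \<in> fst S \<and> y \<in> fst S \<and> gadj x y})"

definition translate_eq :: "shape \<Rightarrow> shape \<Rightarrow> bool" where
  "translate_eq S T \<longleftrightarrow> (\<exists>v::pt. fst T = (\<lambda>x. x + v) ` fst S \<and>
                           snd T = (\<lambda>e. (\<lambda>x. x + v) ` e) ` snd S)"

definition traj :: "pt \<Rightarrow> pt \<Rightarrow> real \<Rightarrow> real \<times> real" where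
  "traj p w t = (of_int (fst p) + t * of_int (fst w), of_int (snd p) + t * of_int (snd w))"

text \<open>Stretch of the (oriented) edge x \<rightarrow> y caused by the growth operations:
  an operation of type (ii) on node u toward u+d lengthens edge u \<rightarrow> u+d by d.\<close>
definition stretch :: "pt set \<Rightarrow> pt \<Rightarrow> pt \<Rightarrow> pt \<Rightarrow> pt" where
  "stretch Sub d x y = (if x \<in> Sub \<and> y = x + d then d
                        else if y \<in> Sub \<and> x = y + d then -d else 0)"

text \<open>One time step: a collision-free set of growth operations (all in direction d,
  applied to the nodes in Ops, at most one per node) transforms S into S'.
  D is the displacement of the old nodes: D anchor = 0 and across every edge the
  displacement difference equals the stretch of that edge.  For tree edges this is
  exactly the sum of contributions along tree paths to the anchor; for the remaining
  edges it is exactly the requirement that no cycle is distorted.\<close>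
definition grow_step :: "shape \<Rightarrow> shape \<Rightarrow> bool" where
  "grow_step S S' \<longleftrightarrow> (\<exists>anchor d Ops D.
     let V = fst S; E = snd S;
         Sub = {u \<in> Ops. {u, u + d} \<in> E};
         Cr = Ops - Sub;
         f = (\<lambda>x. x + D x);
         nw = (\<lambda>u. u + D u + d)
     in anchor \<in> V \<and> d \<in> cardinal_dirs \<and> Ops \<subseteq> V \<and>
        D anchor = 0 \<and>
        (\<forall>x y. {x,y} \<in> E \<longrightarrow> D y - D x = stretch Sub d x y) \<and>
        \<comment> \<open>no collisions during the motion (old nodes, and nodes created by type (i)
            operations, which travel with their creator)\<close>
        (\<forall>x\<in>V. \<forall>y\<in>V. x \<noteq> y \<longrightarrow> (\<forall>t::real. 0 \<le> t \<and> t \<le> 1 \<longrightarrow> traj x (D x) t \<noteq> traj y (D y) t)) \<and>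
        (\<forall>u\<in>Cr. \<forall>y\<in>V. \<forall>t::real. 0 \<le> t \<and> t \<le> 1 \<longrightarrow> traj (u + d) (D u) t \<noteq> traj y (D y) t) \<and>
        (\<forall>u\<in>Cr. \<forall>w\<in>Cr. u \<noteq> w \<longrightarrow> (\<forall>t::real. 0 \<le> t \<and> t \<le> 1 \<longrightarrow> traj (u + d) (D u) t \<noteq> traj (w + d) (D w) t)) \<and>
        \<comment> \<open>no two nodes end at the same point\<close>
        inj_on f V \<and> inj_on nw Ops \<and> f ` V \<inter> nw ` Ops = {} \<and>
        fst S' = f ` V \<union> nw ` Ops \<and>
        snd S' = {{f x, f y} | x y. {x,y} \<in> E \<and> \<not> (x \<in> Sub \<and> y = x + d) \<and> \<not> (y \<in> Sub \<and> x = y + d)}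
                 \<union> {{f u, nw u} | u. u \<in> Ops}
                 \<union> {{nw u, f (u + d)} | u. u \<in> Sub})"

definition single_node :: shape where
  "single_node = ({(0,0)}, {})"

text \<open>Connectivity graph model: S_{t+1}^b = S_t^e.\<close>
definition grows_conn :: "shape \<Rightarrow> shape \<Rightarrow> nat \<Rightarrow> bool" where
  "grows_conn S0 S tf \<longleftrightarrow> (\<exists>seq :: nat \<Rightarrow> shape. seq 0 = S0 \<and>
      (\<forall>i<tf. grow_step (seq i) (seq (Suc i))) \<and> translate_eq (seq tf) S)"

text \<open>Adjacency graph model: S_1^b = S0, S_{t+1}^b = AC(S_t^e); seq i is S_i^e (i \<ge> 1).\<close>
definition grows_adj :: "shape \<Rightarrow> shape \<Rightarrow> nat \<Rightarrow> bool" where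
  "grows_adj S0 S tf \<longleftrightarrow> (\<exists>seq :: nat \<Rightarrow> shape. seq 0 = S0 \<and>
      (\<forall>i<tf. grow_step (if i = 0 then seq 0 else AC (seq i)) (seq (Suc i))) \<and>
      translate_eq (seq tf) S)"

definition path_listing :: "shape \<Rightarrow> pt list \<Rightarrow> bool" where
  "path_listing S ps \<longleftrightarrow> ps \<noteq> [] \<and> distinct ps \<and> fst S = set ps \<and>
     (\<forall>i. Suc i < length ps \<longrightarrow> gadj (ps ! i) (ps ! Suc i)) \<and>
     snd S = {{ps ! i, ps ! Suc i} | i. Suc i < length ps}"

definition inner_pt :: "pt \<Rightarrow> pt \<Rightarrow> int" where
  "inner_pt p q = fst p * fst q + snd p * snd q"

definition turning_points :: "pt list \<Rightarrow> nat set" where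
  "turning_points ps = {i. i < length ps \<and>
     (i = 0 \<or> i = length ps - 1 \<or>
      (0 < i \<and> Suc i < length ps \<and> inner_pt (ps ! (i - 1) - ps ! i) (ps ! Suc i - ps ! i) = 0))}"

text \<open>Staircase: the maximal straight segments between consecutive turning points
  alternate between two consecutive (i.e. perpendicular) cardinal directions a, b;
  equivalently every step of the path goes in direction a or b.\<close>
definition staircase :: "shape \<Rightarrow> pt list \<Rightarrow> bool" where
  "staircase S ps \<longleftrightarrow> path_listing S ps \<and>
     (\<exists>a\<in>cardinal_dirs. \<exists>b\<in>cardinal_dirs. inner_pt a b = 0 \<and>
        (\<forall>i. Suc i < length ps \<longrightarrow> ps ! Suc i - ps ! i \<in> {a, b}))"

end

theory Submission
  imports Defs
begin

definition gg :: "pt \<Rightarrow> pt \<Rightarrow> pt \<Rightarrow> int" where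
  "gg a b x = inner_pt x (a + b)"
definition psum :: "pt list \<Rightarrow> nat \<Rightarrow> pt" where
  "psum w k = sum_list (take k w)"
definition shp :: "pt list \<Rightarrow> shape" where
  "shp w = ({psum w k | k. k \<le> length w}, {{psum w k, psum w (Suc k)} | k. k < length w})"
definition sm :: "nat \<Rightarrow> pt \<Rightarrow> pt" where
  "sm j d = (int j * fst d, int j * snd d)"

lemma sm_0[simp]: "sm 0 d = 0" by (simp add: sm_def zero_prod_def)
lemma sm_Suc: "sm (Suc j) d = sm j d + d" by (simp add: sm_def algebra_simps prod_eq_iff)
lemma sm_add: "sm (i + j) d = sm i d + sm j d" by (simp add: sm_def algebra_simps prod_eq_iff)
lemma sum_replicate: "sum_list (replicate j d) = sm j d"
  by (induction j) (auto simp: sm_Suc add.commute)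

lemma inner_add1: "inner_pt (x + y) z = inner_pt x z + inner_pt y z" by (simp add: inner_pt_def algebra_simps)
lemma inner_add2: "inner_pt z (x + y) = inner_pt z x + inner_pt z y" by (simp add: inner_pt_def algebra_simps)
lemma inner_sm: "inner_pt (sm j d) z = int j * inner_pt d z" by (simp add: inner_pt_def sm_def algebra_simps)
lemma inner_zero[simp]: "inner_pt 0 z = 0" by (simp add: inner_pt_def)
lemma inner_comm: "inner_pt x y = inner_pt y x" by (simp add: inner_pt_def algebra_simps)
lemma inner_minus: "inner_pt (- x) y = - inner_pt x y" by (simp add: inner_pt_def)
lemma inner_diff: "inner_pt (x - y) z = inner_pt x z - inner_pt y z" by (simp add: inner_pt_def algebra_simps)
lemma card_dir_self: "a \<in> cardinal_dirs \<Longrightarrow> inner_pt a a = 1" by (auto simp: cardinal_dirs_def inner_pt_def)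

lemma psum_app: "psum (u @ replicate s d) k = psum u (min k (length u)) + sm (min (k - length u) s) d"
proof (cases "k \<le> length u")
  case True thus ?thesis by (simp add: psum_def)
next
  case False thus ?thesis by (simp add: psum_def sum_replicate)
qed

lemma idx_pts:
  fixes q s r :: nat
  assumes r: "r \<le> 1"
  shows "{..q + 2 * s + r} = (\<lambda>k. k + min (k - q) s) ` {..q + s} \<union>
     (\<lambda>i. i + min (i - q) s + 1) ` ({q..<q + s} \<union> (if r = 1 then {q + s} else {}))"
proof (rule set_eqI, rule iffI)
  fix m assume "m \<in> {..q + 2 * s + r}"
  hence m: "m \<le> q + 2 * s + r" by simp
  show "m \<in> (\<lambda>k. k + min (k - q) s) ` {..q + s} \<union>
     (\<lambda>i. i + min (i - q) s + 1) ` ({q..<q + s} \<union> (if r = 1 then {q + s} else {}))"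
  proof (cases "m \<le> q")
    case True
    hence "m \<in> (\<lambda>k. k + min (k - q) s) ` {..q + s}" by (intro rev_image_eqI[of m]) auto
    thus ?thesis by blast
  next
    case False
    define j where "j = m - q"
    have mj: "m = q + j" using False j_def by simp
    have jd: "j = 2 * (j div 2) + j mod 2" by simp
    consider "j mod 2 = 0" | "j mod 2 = 1" by arith
    thus ?thesis
    proof cases
      case 1
      hence j2: "j = 2 * (j div 2)" using jd by simp
      hence "j div 2 \<le> s" using m mj r by presburger
      hence "q + j div 2 \<in> {..q + s}" "m = (q + j div 2) + min (q + j div 2 - q) s"
        using mj j2 by auto
      hence "m \<in> (\<lambda>k. k + min (k - q) s) ` {..q + s}" by (intro rev_image_eqI) 
      thus ?thesis by blast
    next
      case 2
      hence "q + j div 2 \<in> {q..<q + s} \<union> (if r = 1 then {q + s} else {})"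
        "m = (q + j div 2) + min (q + j div 2 - q) s + 1"
        using m mj jd r by auto
      hence "m \<in> (\<lambda>i. i + min (i - q) s + 1) ` ({q..<q + s} \<union> (if r = 1 then {q + s} else {}))"
        by (intro rev_image_eqI) 
      thus ?thesis by blast
    qed
  qed
next
  fix m assume "m \<in> (\<lambda>k. k + min (k - q) s) ` {..q + s} \<union>
     (\<lambda>i. i + min (i - q) s + 1) ` ({q..<q + s} \<union> (if r = 1 then {q + s} else {}))"
  thus "m \<in> {..q + 2 * s + r}" using r by (auto split: if_splits)
qed

lemma idx_edges:
  fixes q s r :: nat
  assumes r: "r \<le> 1"
  shows "{..<q + 2 * s + r} = {..<q} \<union> (\<lambda>i. i + min (i - q) s) ` ({q..<q + s} \<union> (if r = 1 then {q + s} else {}))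
     \<union> (\<lambda>i. i + min (i - q) s + 1) ` {q..<q + s}"
proof (rule set_eqI, rule iffI)
  fix m assume "m \<in> {..<q + 2 * s + r}"
  hence m: "m < q + 2 * s + r" by simp
  show "m \<in> {..<q} \<union> (\<lambda>i. i + min (i - q) s) ` ({q..<q + s} \<union> (if r = 1 then {q + s} else {}))
     \<union> (\<lambda>i. i + min (i - q) s + 1) ` {q..<q + s}"
  proof (cases "m < q")
    case True thus ?thesis by blast
  next
    case False
    define j where "j = m - q"
    have mj: "m = q + j" using False j_def by simp
    have jd: "j = 2 * (j div 2) + j mod 2" by simp
    consider "j mod 2 = 0" | "j mod 2 = 1" by arith
    thus ?thesis
    proof cases
      case 1
      hence "q + j div 2 \<in> {q..<q + s} \<union> (if r = 1 then {q + s} else {})"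
        "m = (q + j div 2) + min (q + j div 2 - q) s"
        using m mj jd r by auto
      hence "m \<in> (\<lambda>i. i + min (i - q) s) ` ({q..<q + s} \<union> (if r = 1 then {q + s} else {}))"
        by (intro rev_image_eqI) 
      thus ?thesis by blast
    next
      case 2
      hence "q + j div 2 \<in> {q..<q + s}"
        "m = (q + j div 2) + min (q + j div 2 - q) s + 1"
        using m mj jd r by auto
      hence "m \<in> (\<lambda>i. i + min (i - q) s + 1) ` {q..<q + s}"
        by (intro rev_image_eqI) 
      thus ?thesis by blast
    qed
  qed
next
  fix m assume "m \<in> {..<q} \<union> (\<lambda>i. i + min (i - q) s) ` ({q..<q + s} \<union> (if r = 1 then {q + s} else {}))
     \<union> (\<lambda>i. i + min (i - q) s + 1) ` {q..<q + s}"
  thus "m \<in> {..<q + 2 * s + r}" using r by (auto split: if_splits)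
qed

lemma arith_disj:
  fixes q s j i :: nat
  assumes "j \<le> q + s" "q \<le> i" "i \<le> q + s"
  shows "j + min (j - q) s \<noteq> i + min (i - q) s + 1"
proof (cases "j \<le> q")
  case True thus ?thesis using assms by auto
next
  case False
  hence "j + min (j - q) s = 2 * j - q" "i + min (i - q) s + 1 = 2 * i - q + 1" using assms by auto
  show ?thesis
  proof
    assume "j + min (j - q) s = i + min (i - q) s + 1"
    hence e: "2 * j = 2 * i + 1" using \<open>j + min (j - q) s = 2 * j - q\<close> \<open>i + min (i - q) s + 1 = 2 * i - q + 1\<close> False assms by linarith
    have "even (2 * j)" by simp
    moreover have "odd (2 * i + 1)" by simp
    ultimately show False using e by simp
  qed
qed

lemma arith_mono:
  fixes q s j k :: nat
  assumes "j < k"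
  shows "j + min (j - q) s < k + min (k - q) s" "min (j - q) s \<le> min (k - q) s"
  using assms by auto


definition reach :: "pt \<Rightarrow> pt \<Rightarrow> pt list \<Rightarrow> nat \<Rightarrow> bool" where
  "reach a b w t \<longleftrightarrow> (\<exists>ws. ws 0 = [] \<and> ws t = w \<and> (\<forall>i\<le>t. set (ws i) \<subseteq> {a,b}) \<and>
      (\<forall>i<t. grow_step (shp (ws i)) (shp (ws (Suc i)))))"

lemma reach0: "reach a b [] 0"
  unfolding reach_def by (rule exI[of _ "\<lambda>_. []"]) simp

lemma reach_step:
  assumes "reach a b w t" "grow_step (shp w) (shp w')" "set w' \<subseteq> {a,b}"
  shows "reach a b w' (Suc t)"
proof -
  obtain ws where ws: "ws 0 = []" "ws t = w" "\<forall>i\<le>t. set (ws i) \<subseteq> {a,b}"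
    "\<forall>i<t. grow_step (shp (ws i)) (shp (ws (Suc i)))" using assms(1) unfolding reach_def by blast
  define ws' where "ws' = ws(Suc t := w')"
  have "ws' 0 = []" "ws' (Suc t) = w'" using ws unfolding ws'_def by auto
  moreover have "\<forall>i\<le>Suc t. set (ws' i) \<subseteq> {a,b}" using ws assms(3) unfolding ws'_def
    by (auto simp: le_Suc_eq)
  moreover have "\<forall>i<Suc t. grow_step (shp (ws' i)) (shp (ws' (Suc i)))"
  proof (intro allI impI)
    fix i assume "i < Suc t"
    hence "i < t \<or> i = t" by auto
    thus "grow_step (shp (ws' i)) (shp (ws' (Suc i)))"
      using ws assms(2) unfolding ws'_def by auto
  qed
  ultimately show ?thesis unfolding reach_def by blast
qed

fun nb :: "nat \<Rightarrow> nat" where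
  "nb L = (if L = 0 then 0 else Suc (nb (L div 2)))"

declare nb.simps[simp del]

lemma nb_0[simp]: "nb 0 = 0" by (simp add: nb.simps)
lemma nb_pos: "L \<noteq> 0 \<Longrightarrow> nb L = Suc (nb (L div 2))" by (simp add: nb.simps)

lemma nb_mono: "L \<le> N \<Longrightarrow> nb L \<le> nb N"
proof (induction N arbitrary: L rule: less_induct)
  case (less N)
  show ?case
  proof (cases "L = 0")
    case True thus ?thesis by simp
  next
    case False
    hence "N \<noteq> 0" using less.prems by auto
    moreover have "nb (L div 2) \<le> nb (N div 2)"
      using less.IH[of "N div 2" "L div 2"] less.prems \<open>N \<noteq> 0\<close> by (simp add: div_le_mono)
    ultimately show ?thesis using False by (simp add: nb_pos)
  qed
qed

lemma nb_pow: "L \<noteq> 0 \<Longrightarrow> 2 ^ nb L \<le> 2 * L"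
proof (induction L rule: less_induct)
  case (less L)
  show ?case
  proof (cases "L div 2 = 0")
    case True thus ?thesis using less.prems by (simp add: nb_pos)
  next
    case False
    hence "2 ^ nb (L div 2) \<le> 2 * (L div 2)" using less.IH[of "L div 2"] less.prems by simp
    thus ?thesis using less.prems by (simp add: nb_pos)
  qed
qed

definition Tn :: "pt list \<Rightarrow> nat" where
  "Tn w = card {i. 0 < i \<and> i < length w \<and> w ! (i - 1) \<noteq> w ! i}"

lemma Tn_app:
  assumes "u \<noteq> []" "last u \<noteq> e" "0 < L"
  shows "Tn u + 1 \<le> Tn (u @ replicate L e)"
proof -
  let ?A = "{i. 0 < i \<and> i < length u \<and> u ! (i - 1) \<noteq> u ! i}"
  let ?B = "{i. 0 < i \<and> i < length (u @ replicate L e) \<and> (u @ replicate L e) ! (i - 1) \<noteq> (u @ replicate L e) ! i}"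
  have "insert (length u) ?A \<subseteq> ?B"
  proof
    fix i assume "i \<in> insert (length u) ?A"
    thus "i \<in> ?B"
    proof
      assume i: "i = length u"
      have "(u @ replicate L e) ! (i - 1) = last u" using assms(1) i by (simp add: nth_append last_conv_nth)
      moreover have "(u @ replicate L e) ! i = e" using i assms(3) by (simp add: nth_append)
      moreover have "0 < length u" using assms(1) by simp
      ultimately show ?thesis using i assms by simp
    next
      assume "i \<in> ?A"
      thus ?thesis by (auto simp: nth_append)
    qed
  qed
  moreover have "finite ?B" by simp
  moreover have "length u \<notin> ?A" by simp
  ultimately have "card (insert (length u) ?A) \<le> card ?B" by (intro card_mono)
  thus ?thesis unfolding Tn_def using \<open>length u \<notin> ?A\<close> by simp
qed

lemma decomp: "w \<noteq> [] \<Longrightarrow> \<exists>u L. w = u @ replicate L (last w) \<and> 0 < L \<and> (u = [] \<or> last u \<noteq> last w)"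
proof (induction w rule: rev_induct)
  case Nil thus ?case by simp
next
  case (snoc x v)
  show ?case
  proof (cases "v = [] \<or> last v \<noteq> x")
    case True
    thus ?thesis by (intro exI[of _ v] exI[of _ 1]) auto
  next
    case False
    hence "v \<noteq> []" "last v = x" by auto
    then obtain u L where uL: "v = u @ replicate L x" "0 < L" "u = [] \<or> last u \<noteq> x"
      using snoc.IH by auto
    have "v @ [x] = u @ replicate (Suc L) x" using uL(1) by (simp add: replicate_append_same[symmetric])
    thus ?thesis using uL by (intro exI[of _ u] exI[of _ "Suc L"]) auto
  qed
qed

locale stair = fixes a b :: pt assumes a: "a \<in> cardinal_dirs" and b: "b \<in> cardinal_dirs"
  and ab: "inner_pt a b = 0"
begin

abbreviation g where "g \<equiv> gg a b"

lemma g_letter: "x \<in> {a,b} \<Longrightarrow> g x = 1"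
  using a b ab card_dir_self[OF a] card_dir_self[OF b] inner_comm[of a b]
  by (auto simp: gg_def inner_add2)
lemma g_add: "g (x + y) = g x + g y" by (simp add: gg_def inner_add1)
lemma g_sm: "g (sm j x) = int j * g x" by (simp add: gg_def inner_sm)
definition Gr :: "pt \<Rightarrow> real \<times> real \<Rightarrow> real" where
  "Gr c z = fst z * of_int (fst c) + snd z * of_int (snd c)"

lemma Gr_traj: "Gr (a + b) (traj p w t) = of_int (g p) + t * of_int (g w)"
  by (simp add: Gr_def traj_def gg_def inner_pt_def algebra_simps)

lemma g_0[simp]: "g 0 = 0" by (simp add: gg_def)
lemma g_sum_list: "set xs \<subseteq> {a,b} \<Longrightarrow> g (sum_list xs) = int (length xs)"
  by (induction xs) (auto simp: g_add g_letter)
lemma g_psum: "set w \<subseteq> {a,b} \<Longrightarrow> g (psum w k) = int (min k (length w))"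
  unfolding psum_def by (subst g_sum_list) (auto dest: in_set_takeD)

lemma core_facts:
  fixes u :: "pt list" and d :: pt and s r :: nat
  assumes u: "set u \<subseteq> {a,b}" and d: "d \<in> {a,b}" and r: "r \<le> 1"
  defines "q \<equiv> length u" and "n \<equiv> length u + s" and "n' \<equiv> length u + 2 * s + r"
    and "P \<equiv> psum (u @ replicate s d)" and "P' \<equiv> psum (u @ replicate (2 * s + r) d)"
    and "cnt \<equiv> (\<lambda>k::nat. min (k - length u) s)"
  shows "\<And>k. k \<le> n \<Longrightarrow> g (P k) = int k"
    and "\<And>k. k \<le> n' \<Longrightarrow> g (P' k) = int k"
    and "\<And>k. k \<le> n \<Longrightarrow> P k + sm (cnt k) d = P' (k + cnt k)"
    and "\<And>i. q \<le> i \<Longrightarrow> i \<le> n \<Longrightarrow> (i < n \<or> r = 1) \<Longrightarrow> P i + sm (cnt i) d + d = P' (i + cnt i + 1)"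
    and "\<And>k. q \<le> k \<Longrightarrow> k < n \<Longrightarrow> P (Suc k) = P k + d"
    and "g d = 1"
proof -
  have sw: "set (u @ replicate s d) \<subseteq> {a,b}" and sw': "set (u @ replicate (2 * s + r) d) \<subseteq> {a,b}"
    using u d by auto
  show "\<And>k. k \<le> n \<Longrightarrow> g (P k) = int k" unfolding P_def n_def using g_psum[OF sw] by simp
  show "\<And>k. k \<le> n' \<Longrightarrow> g (P' k) = int k" unfolding P'_def n'_def using g_psum[OF sw'] by simp
  show "g d = 1" using g_letter d by simp
  show "\<And>k. k \<le> n \<Longrightarrow> P k + sm (cnt k) d = P' (k + cnt k)"
  proof -
    fix k assume k: "k \<le> n"
    show "P k + sm (cnt k) d = P' (k + cnt k)"
    proof (cases "k \<le> q")
      case True thus ?thesis unfolding P_def P'_def psum_app cnt_def q_def by simp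
    next
      case False
      then obtain j where kj: "k = q + j" "j \<le> s" using k unfolding n_def q_def
        by (metis add_le_cancel_left le_add_diff_inverse nat_le_linear)
      thus ?thesis unfolding P_def P'_def psum_app cnt_def q_def
        by (simp add: sm_add add.assoc)
    qed
  qed
  show "\<And>i. q \<le> i \<Longrightarrow> i \<le> n \<Longrightarrow> (i < n \<or> r = 1) \<Longrightarrow> P i + sm (cnt i) d + d = P' (i + cnt i + 1)"
  proof -
    fix i assume i: "q \<le> i" "i \<le> n" "i < n \<or> r = 1"
    then obtain j where kj: "i = q + j" "j \<le> s" "j < s \<or> r = 1" unfolding n_def q_def
      by (metis add_le_cancel_left le_add_diff_inverse nat_add_left_cancel_less)
    hence "min (Suc (j + j)) (2 * s + r) = Suc (j + j)" using r by auto
    thus "P i + sm (cnt i) d + d = P' (i + cnt i + 1)" using kj unfolding P_def P'_def psum_app q_def cnt_def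
      by (simp add: sm_add sm_Suc add.assoc)
  qed
  show "\<And>k. q \<le> k \<Longrightarrow> k < n \<Longrightarrow> P (Suc k) = P k + d"
  proof -
    fix k assume k: "q \<le> k" "k < n"
    then obtain j where kj: "k = q + j" "j < s" unfolding n_def q_def
      by (metis add_le_cancel_left le_add_diff_inverse nat_add_left_cancel_less)
    thus "P (Suc k) = P k + d" unfolding P_def psum_app q_def by (simp add: sm_Suc add.assoc)
  qed
qed

lemma core:
  fixes u :: "pt list" and d :: pt and s r :: nat
  assumes u: "set u \<subseteq> {a,b}" and d: "d \<in> {a,b}" and r: "r \<le> 1"
  shows "grow_step (shp (u @ replicate s d)) (shp (u @ replicate (2 * s + r) d))"
proof -
  define q where "q = length u"
  define n where "n = length u + s"
  define n' where "n' = length u + 2 * s + r"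
  define P where "P = psum (u @ replicate s d)"
  define P' where "P' = psum (u @ replicate (2 * s + r) d)"
  define cnt where "cnt = (\<lambda>k::nat. min (k - length u) s)"
  have gd: "g d = 1" using g_letter d by simp
  have gP: "\<And>k. k \<le> n \<Longrightarrow> g (P k) = int k" using core_facts(1)[OF u d r] by (simp add: n_def P_def)
  have gP': "\<And>k. k \<le> n' \<Longrightarrow> g (P' k) = int k" using core_facts(2)[OF u d r] by (simp add: n'_def P'_def)
  have fP: "\<And>k. k \<le> n \<Longrightarrow> P k + sm (cnt k) d = P' (k + cnt k)"
    using core_facts(3)[OF u d r] by (simp add: n_def P_def P'_def cnt_def)
  have nwP: "\<And>i. q \<le> i \<Longrightarrow> i \<le> n \<Longrightarrow> (i < n \<or> r = 1) \<Longrightarrow> P i + sm (cnt i) d + d = P' (i + cnt i + 1)"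
    using core_facts(4)[OF u d r] by (simp add: q_def n_def P_def P'_def cnt_def)
  have PSuc: "\<And>k. q \<le> k \<Longrightarrow> k < n \<Longrightarrow> P (Suc k) = P k + d"
    using core_facts(5)[OF u d r] by (simp add: q_def n_def P_def)
  have Pinj: "\<And>j k. j \<le> n \<Longrightarrow> k \<le> n \<Longrightarrow> P j = P k \<Longrightarrow> j = k" using gP by (metis of_nat_eq_iff)
  have P'inj: "\<And>j k. j \<le> n' \<Longrightarrow> k \<le> n' \<Longrightarrow> P' j = P' k \<Longrightarrow> j = k" using gP' by (metis of_nat_eq_iff)
  define D where "D = (\<lambda>x. sm (cnt (nat (g x))) d)"
  have DP: "\<And>k. k \<le> n \<Longrightarrow> D (P k) = sm (cnt k) d" by (simp add: D_def gP)
  define I where "I = {q..<n} \<union> (if r = 1 then {n} else {})"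
  define Ops where "Ops = P ` I"
  have V: "fst (shp (u @ replicate s d)) = P ` {..n}"
    unfolding shp_def P_def n_def by auto
  have E: "snd (shp (u @ replicate s d)) = (\<lambda>k. {P k, P (Suc k)}) ` {..<n}"
    unfolding shp_def P_def n_def by auto
  have V': "fst (shp (u @ replicate (2 * s + r) d)) = P' ` {..n'}"
    unfolding shp_def P'_def n'_def by auto
  have E': "snd (shp (u @ replicate (2 * s + r) d)) = (\<lambda>k. {P' k, P' (Suc k)}) ` {..<n'}"
    unfolding shp_def P'_def n'_def by auto

  have qn: "q \<le> n" "n \<le> n'" "n = q + s" "n' = q + 2 * s + r" by (simp_all add: q_def n_def n'_def)
  have cntq: "\<And>k. cnt k = min (k - q) s" by (simp add: cnt_def q_def)
  have P0: "P 0 = 0" by (simp add: P_def psum_def)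
  have gPd: "\<And>k. k \<le> n \<Longrightarrow> g (P k + d) = int k + 1" using gP by (simp add: g_add gd)
  have gDP: "\<And>k. k \<le> n \<Longrightarrow> g (D (P k)) = int (cnt k)" using DP by (simp add: g_sm gd)
  have memS: "\<And>j. j \<le> n \<Longrightarrow> P j \<in> P ` {q..<n} \<longleftrightarrow> q \<le> j \<and> j < n"
  proof
    fix j assume j: "j \<le> n" "P j \<in> P ` {q..<n}"
    then obtain i where "i \<in> {q..<n}" "P j = P i" by auto
    thus "q \<le> j \<and> j < n" using Pinj[of j i] j by auto
  qed auto
  have neq: "\<And>j. j < n \<Longrightarrow> P j \<noteq> P (Suc j) + d"
  proof
    fix j assume j: "j < n" "P j = P (Suc j) + d"
    hence "g (P j) = g (P (Suc j) + d)" by simp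
    thus False using gP[of j] gPd[of "Suc j"] j by simp
  qed
  have Sub: "{x \<in> Ops. {x, x + d} \<in> (\<lambda>k. {P k, P (Suc k)}) ` {..<n}} = P ` {q..<n}"
  proof (rule set_eqI, rule iffI)
    fix x assume "x \<in> {x \<in> Ops. {x, x + d} \<in> (\<lambda>k. {P k, P (Suc k)}) ` {..<n}}"
    then obtain i k where i: "i \<in> I" "x = P i" and k: "k < n" "{x, x + d} = {P k, P (Suc k)}"
      unfolding Ops_def by auto
    have iq: "i \<le> n" "q \<le> i" using i(1) qn unfolding I_def by (auto split: if_splits)
    have "x + d \<in> {P k, P (Suc k)}" using k(2) by auto
    hence "g (x + d) \<le> int n" using gP k(1) by auto
    moreover have "g (x + d) = int i + 1" using gPd[OF iq(1)] i(2) by simp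
    ultimately have "i < n" by simp
    thus "x \<in> P ` {q..<n}" using i iq by auto
  next
    fix x assume "x \<in> P ` {q..<n}"
    then obtain i where i: "q \<le> i" "i < n" "x = P i" by auto
    have "x \<in> Ops" unfolding Ops_def I_def using i by auto
    moreover have "{x, x + d} \<in> (\<lambda>k. {P k, P (Suc k)}) ` {..<n}" using PSuc[OF i(1,2)] i by auto
    ultimately show "x \<in> {x \<in> Ops. {x, x + d} \<in> (\<lambda>k. {P k, P (Suc k)}) ` {..<n}}" by simp
  qed
  have Cr: "Ops - P ` {q..<n} = (if r = 1 then {P n} else {})"
  proof -
    have nP: "P n \<notin> P ` {q..<n}" using memS[of n] by simp
    show ?thesis
    proof (cases "r = 1")
      case True
      hence "Ops = insert (P n) (P ` {q..<n})" unfolding Ops_def I_def by auto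
      thus ?thesis using nP True by (simp add: insert_Diff_if)
    next
      case False
      hence "Ops = P ` {q..<n}" unfolding Ops_def I_def by auto
      thus ?thesis using False by auto
    qed
  qed
  have c1: "0 \<in> P ` {..n}" using P0 by force
  have c2: "d \<in> cardinal_dirs" using d a b by auto
  have c3: "Ops \<subseteq> P ` {..n}" unfolding Ops_def I_def using qn by auto
  have c4: "D 0 = 0" by (simp add: D_def cnt_def)
  have c5: "\<forall>x y. {x, y} \<in> (\<lambda>k. {P k, P (Suc k)}) ` {..<n} \<longrightarrow> D y - D x = stretch (P ` {q..<n}) d x y"
  proof (intro allI impI)
    fix x y assume "{x, y} \<in> (\<lambda>k. {P k, P (Suc k)}) ` {..<n}"
    then obtain k where k: "k < n" "{x,y} = {P k, P (Suc k)}" by auto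
    have DPk: "D (P k) = sm (cnt k) d" "D (P (Suc k)) = sm (cnt (Suc k)) d" using DP k by auto
    have cS: "cnt (Suc k) = (if q \<le> k then Suc (cnt k) else cnt k)" using k qn unfolding cntq by auto
    have mk: "P k \<in> P ` {q..<n} \<longleftrightarrow> q \<le> k" using memS[of k] k by auto
    have ne: "P k \<noteq> P (Suc k) + d" using neq k by auto
    from k(2) consider "x = P k" "y = P (Suc k)" | "x = P (Suc k)" "y = P k" by (auto simp: doubleton_eq_iff)
    thus "D y - D x = stretch (P ` {q..<n}) d x y"
    proof cases
      case 1
      show ?thesis
      proof (cases "q \<le> k")
        case True
        thus ?thesis using 1 DPk cS mk PSuc[of k] k by (simp add: stretch_def sm_Suc)
      next
        case False
        thus ?thesis using 1 DPk cS mk ne by (simp add: stretch_def)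
      qed
    next
      case 2
      show ?thesis
      proof (cases "q \<le> k")
        case True
        thus ?thesis using 2 DPk cS mk PSuc[of k] k ne by (simp add: stretch_def sm_Suc)
      next
        case False
        thus ?thesis using 2 DPk cS mk ne by (simp add: stretch_def)
      qed
    qed
  qed
  have cmono: "\<And>j k. j \<le> k \<Longrightarrow> cnt j \<le> cnt k" unfolding cntq by auto
  have sep: "\<And>j k (t::real). j < k \<Longrightarrow> 0 \<le> t \<Longrightarrow> real j + t * real (cnt j) < real k + t * real (cnt k)"
  proof -
    fix j k :: nat and t :: real assume jk: "j < k" "0 \<le> t"
    have "t * real (cnt j) \<le> t * real (cnt k)" using cmono[of j k] jk by (intro mult_left_mono) auto
    thus "real j + t * real (cnt j) < real k + t * real (cnt k)" using jk by linarith
  qed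
  have GP: "\<And>k t. k \<le> n \<Longrightarrow> Gr (a + b) (traj (P k) (D (P k)) t) = real k + t * real (cnt k)"
    using gP gDP by (simp add: Gr_traj)
  have c6: "\<forall>x\<in>P ` {..n}. \<forall>y\<in>P ` {..n}. x \<noteq> y \<longrightarrow>
           (\<forall>t. 0 \<le> t \<and> t \<le> 1 \<longrightarrow> traj x (D x) t \<noteq> traj y (D y) t)"
  proof (intro ballI impI allI)
    fix x y t assume x: "x \<in> P ` {..n}" and y: "y \<in> P ` {..n}" and xy: "x \<noteq> y" and t: "0 \<le> (t::real) \<and> t \<le> 1"
    obtain j k where jk: "j \<le> n" "k \<le> n" "x = P j" "y = P k" using x y by auto
    have "j \<noteq> k" using jk xy by auto
    hence "real j + t * real (cnt j) \<noteq> real k + t * real (cnt k)"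
      using sep[of j k t] sep[of k j t] t by (cases "j < k") auto
    show "traj x (D x) t \<noteq> traj y (D y) t"
    proof
      assume "traj x (D x) t = traj y (D y) t"
      hence "Gr (a + b) (traj x (D x) t) = Gr (a + b) (traj y (D y) t)" by simp
      thus False using GP[of j t] GP[of k t] jk \<open>real j + t * real (cnt j) \<noteq> real k + t * real (cnt k)\<close> by simp
    qed
  qed
  have c7: "\<forall>u\<in>(if r = 1 then {P n} else {}). \<forall>y\<in>P ` {..n}.
           \<forall>t. 0 \<le> t \<and> t \<le> 1 \<longrightarrow> traj (u + d) (D u) t \<noteq> traj y (D y) t"
  proof (intro ballI impI allI)
    fix u y t assume u: "u \<in> (if r = 1 then {P n} else {})" and y: "y \<in> P ` {..n}" and t: "0 \<le> (t::real) \<and> t \<le> 1"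
    have un: "u = P n" using u by (auto split: if_splits)
    obtain k where k: "k \<le> n" "y = P k" using y by auto
    have "Gr (a + b) (traj (u + d) (D u) t) = real n + 1 + t * real (cnt n)"
      using un gPd[of n] gDP[of n] by (simp add: Gr_traj)
    moreover have "t * real (cnt k) \<le> t * real (cnt n)" using cmono[of k n] k t by (intro mult_left_mono) auto
    hence "real k + t * real (cnt k) < real n + 1 + t * real (cnt n)" using k by linarith
    ultimately show "traj (u + d) (D u) t \<noteq> traj y (D y) t" using GP[of k t] k by auto
  qed
  have c8: "\<forall>u\<in>(if r = 1 then {P n} else {}). \<forall>w\<in>(if r = 1 then {P n} else {}). u \<noteq> w \<longrightarrow>
           (\<forall>t. 0 \<le> t \<and> t \<le> 1 \<longrightarrow> traj (u + d) (D u) t \<noteq> traj (w + d) (D w) t)"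
    by auto
  have gf: "\<And>k. k \<le> n \<Longrightarrow> g (P k + D (P k)) = int (k + cnt k)" using gP gDP by (simp add: g_add)
  have gnw: "\<And>k. k \<le> n \<Longrightarrow> g (P k + D (P k) + d) = int (k + cnt k) + 1" using gf by (simp add: g_add gd)
  have c9: "inj_on (\<lambda>x. x + D x) (P ` {..n})"
  proof (rule inj_onI)
    fix x y assume "x \<in> P ` {..n}" "y \<in> P ` {..n}" and e: "x + D x = y + D y"
    then obtain j k where jk: "j \<le> n" "k \<le> n" "x = P j" "y = P k" by auto
    have "g (x + D x) = g (y + D y)" using e by simp
    hence "int (j + cnt j) = int (k + cnt k)" using gf[of j] gf[of k] jk by simp
    hence "j + cnt j = k + cnt k" by simp
    hence "j = k" using arith_mono(1)[of j k q s] arith_mono(1)[of k j q s] unfolding cntq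
      by (cases j k rule: linorder_cases) auto
    thus "x = y" using jk by simp
  qed
  have IS: "I \<subseteq> {q..n}" unfolding I_def using qn by auto
  have c10: "inj_on (\<lambda>u. u + D u + d) Ops"
  proof (rule inj_onI)
    fix x y assume "x \<in> Ops" "y \<in> Ops" and e: "x + D x + d = y + D y + d"
    then obtain j k where jk: "j \<in> I" "k \<in> I" "x = P j" "y = P k" unfolding Ops_def by auto
    have jk': "j \<le> n" "k \<le> n" using jk IS by auto
    have "g (x + D x + d) = g (y + D y + d)" using e by simp
    hence "int (j + cnt j) + 1 = int (k + cnt k) + 1" using gnw[of j] gnw[of k] jk jk' by simp
    hence "j + cnt j = k + cnt k" by simp
    hence "j = k" using arith_mono(1)[of j k q s] arith_mono(1)[of k j q s] unfolding cntq
      by (cases j k rule: linorder_cases) auto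
    thus "x = y" using jk by simp
  qed
  have c11: "(\<lambda>x. x + D x) ` P ` {..n} \<inter> (\<lambda>u. u + D u + d) ` Ops = {}"
  proof (rule ccontr)
    assume "(\<lambda>x. x + D x) ` P ` {..n} \<inter> (\<lambda>u. u + D u + d) ` Ops \<noteq> {}"
    then obtain j i where ji: "j \<le> n" "i \<in> I" "P j + D (P j) = P i + D (P i) + d" unfolding Ops_def by blast
    have i': "q \<le> i" "i \<le> n" using ji IS by auto
    have "g (P j + D (P j)) = g (P i + D (P i) + d)" using ji by simp
    hence "int (j + cnt j) = int (i + cnt i) + 1" using gf[of j] gnw[of i] ji i' by simp
    hence "j + cnt j = i + cnt i + 1" by simp
    thus False using arith_disj[of j q s i] ji i' qn unfolding cntq by simp
  qed
  have img1: "(\<lambda>x. x + D x) ` P ` {..n} = P' ` ((\<lambda>k. k + cnt k) ` {..n})"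
    unfolding image_image using fP DP by (intro image_cong) auto
  have img2: "(\<lambda>u. u + D u + d) ` Ops = P' ` ((\<lambda>i. i + cnt i + 1) ` I)"
    unfolding image_image Ops_def
  proof (intro image_cong refl)
    fix i assume "i \<in> I"
    hence "q \<le> i" "i \<le> n" "i < n \<or> r = 1" unfolding I_def using qn by (auto split: if_splits)
    thus "P i + D (P i) + d = P' (i + cnt i + 1)" using nwP DP by simp
  qed
  have c12: "P' ` {..n'} = (\<lambda>x. x + D x) ` P ` {..n} \<union> (\<lambda>u. u + D u + d) ` Ops"
    unfolding img1 img2 image_Un[symmetric] using idx_pts[OF r, of q s] qn unfolding cntq I_def by simp
  define EI where "EI = (\<lambda>m. {P' m, P' (Suc m)})"
  have EIim: "(\<lambda>k. {P' k, P' (Suc k)}) ` {..<n'} = EI ` {..<n'}" unfolding EI_def by simp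
  have fq: "\<And>k. k \<le> q \<Longrightarrow> P k + D (P k) = P' k"
  proof -
    fix k assume k: "k \<le> q"
    hence "cnt k = 0" "k \<le> n" unfolding cntq using qn by auto
    thus "P k + D (P k) = P' k" using fP[of k] DP[of k] by simp
  qed
  have A: "{{x + D x, y + D y} |x y.
     {x, y} \<in> (\<lambda>k. {P k, P (Suc k)}) ` {..<n} \<and>
     \<not> (x \<in> P ` {q..<n} \<and> y = x + d) \<and> \<not> (y \<in> P ` {q..<n} \<and> x = y + d)} = EI ` {..<q}"
  proof (rule set_eqI, rule iffI)
    fix z assume "z \<in> {{x + D x, y + D y} |x y.
     {x, y} \<in> (\<lambda>k. {P k, P (Suc k)}) ` {..<n} \<and>
     \<not> (x \<in> P ` {q..<n} \<and> y = x + d) \<and> \<not> (y \<in> P ` {q..<n} \<and> x = y + d)}"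
    then obtain x y k where z: "z = {x + D x, y + D y}" and k: "k < n" "{x,y} = {P k, P (Suc k)}"
      and nx: "\<not> (x \<in> P ` {q..<n} \<and> y = x + d)" and ny: "\<not> (y \<in> P ` {q..<n} \<and> x = y + d)" by blast
    have xy: "x = P k \<and> y = P (Suc k) \<or> x = P (Suc k) \<and> y = P k" using k(2) by (simp add: doubleton_eq_iff)
    have kq: "k < q"
    proof (rule ccontr)
      assume "\<not> k < q"
      hence "P k \<in> P ` {q..<n}" "P (Suc k) = P k + d" using k PSuc by auto
      thus False using xy nx ny by blast
    qed
    have f1: "P k + D (P k) = P' k" using fq kq by simp
    have f2: "P (Suc k) + D (P (Suc k)) = P' (Suc k)" using fq kq by simp
    have "{x + D x, y + D y} = EI k" using xy unfolding EI_def
      by (elim disjE) (simp_all add: f1 f2 insert_commute)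
    thus "z \<in> EI ` {..<q}" using z kq by auto
  next
    fix z assume "z \<in> EI ` {..<q}"
    then obtain m where m: "m < q" "z = EI m" by auto
    have "{P m, P (Suc m)} \<in> (\<lambda>k. {P k, P (Suc k)}) ` {..<n}" using m qn by auto
    moreover have "P m \<notin> P ` {q..<n}" using memS[of m] m qn by simp
    hence "\<not> (P m \<in> P ` {q..<n} \<and> P (Suc m) = P m + d)" by blast
    moreover have "P m \<noteq> P (Suc m) + d" using neq[of m] m qn by simp
    hence "\<not> (P (Suc m) \<in> P ` {q..<n} \<and> P m = P (Suc m) + d)" by blast
    moreover have "P m + D (P m) = P' m" "P (Suc m) + D (P (Suc m)) = P' (Suc m)" using m fq by simp_all
    hence "z = {P m + D (P m), P (Suc m) + D (P (Suc m))}" using m unfolding EI_def by simp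
    ultimately show "z \<in> {{x + D x, y + D y} |x y.
     {x, y} \<in> (\<lambda>k. {P k, P (Suc k)}) ` {..<n} \<and>
     \<not> (x \<in> P ` {q..<n} \<and> y = x + d) \<and> \<not> (y \<in> P ` {q..<n} \<and> x = y + d)}" by blast
  qed
  have B: "{{u + D u, u + D u + d} |u. u \<in> Ops} = EI ` ((\<lambda>i. i + cnt i) ` I)"
  proof -
    have "{{u + D u, u + D u + d} |u. u \<in> Ops} = (\<lambda>u. {u + D u, u + D u + d}) ` Ops" by blast
    also have "\<dots> = EI ` ((\<lambda>i. i + cnt i) ` I)" unfolding Ops_def image_image EI_def
    proof (intro image_cong refl)
      fix i assume "i \<in> I"
      hence "q \<le> i" "i \<le> n" "i < n \<or> r = 1" unfolding I_def using qn by (auto split: if_splits)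
      thus "{P i + D (P i), P i + D (P i) + d} = {P' (i + cnt i), P' (Suc (i + cnt i))}"
        using nwP fP DP by simp
    qed
    finally show ?thesis .
  qed
  have C: "{{u + D u + d, u + d + D (u + d)} |u. u \<in> P ` {q..<n}} = EI ` ((\<lambda>i. i + cnt i + 1) ` {q..<n})"
  proof -
    have "{{u + D u + d, u + d + D (u + d)} |u. u \<in> P ` {q..<n}} = (\<lambda>u. {u + D u + d, u + d + D (u + d)}) ` P ` {q..<n}" by blast
    also have "\<dots> = EI ` ((\<lambda>i. i + cnt i + 1) ` {q..<n})" unfolding image_image EI_def
    proof (intro image_cong refl)
      fix i assume i: "i \<in> {q..<n}"
      hence "cnt (Suc i) = Suc (cnt i)" unfolding cntq using qn by auto
      hence "P (Suc i) + D (P (Suc i)) = P' (Suc (Suc (i + cnt i)))" using fP[of "Suc i"] DP[of "Suc i"] i by simp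
      thus "{P i + D (P i) + d, P i + d + D (P i + d)} = {P' (i + cnt i + 1), P' (Suc (i + cnt i + 1))}"
        using nwP[of i] DP[of i] PSuc[of i] i by simp
    qed
    finally show ?thesis .
  qed
  have c13: "(\<lambda>k. {P' k, P' (Suc k)}) ` {..<n'} =
    {{x + D x, y + D y} |x y.
     {x, y} \<in> (\<lambda>k. {P k, P (Suc k)}) ` {..<n} \<and>
     \<not> (x \<in> P ` {q..<n} \<and> y = x + d) \<and> \<not> (y \<in> P ` {q..<n} \<and> x = y + d)} \<union>
    {{u + D u, u + D u + d} |u. u \<in> Ops} \<union>
    {{u + D u + d, u + d + D (u + d)} |u. u \<in> P ` {q..<n}}"
  proof -
    have idxE: "{..<n'} = {..<q} \<union> (\<lambda>i. i + cnt i) ` I \<union> (\<lambda>i. i + cnt i + 1) ` {q..<n}"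
      unfolding cntq I_def qn(3) qn(4) by (rule idx_edges[OF r])
    show ?thesis unfolding A B C EIim idxE image_Un EI_def by (rule refl)
  qed
  show ?thesis
    unfolding grow_step_def Let_def
    apply (rule exI[of _ 0], rule exI[of _ d], rule exI[of _ Ops], rule exI[of _ D])
    apply (simp only: V E V' E' Sub Cr)
    apply (intro conjI)
    apply (fact c1) apply (fact c2) apply (fact c3) apply (fact c4) apply (fact c5) apply (fact c6)
    apply (fact c7) apply (fact c8) apply (fact c9) apply (fact c10) apply (fact c11) apply (fact c12)
    by (fact c13)
qed

lemma step2:
  assumes u: "set u \<subseteq> {a,b}" and e: "e \<in> {a,b}" and sL: "s < L" "L \<le> 2 * s + 1"
  shows "grow_step (shp (u @ replicate s e)) (shp (u @ replicate L e))"
proof (cases "L = 2 * s + 1")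
  case True thus ?thesis using core[OF u e, of 1 s] by simp
next
  case False
  define s' where "s' = L - s"
  define u1 where "u1 = u @ replicate (s - s') e"
  have u1: "set u1 \<subseteq> {a,b}" using u e unfolding u1_def by auto
  have "u1 @ replicate s' e = u @ replicate s e" unfolding u1_def
    using sL False by (simp add: s'_def replicate_add[symmetric])
  moreover have "u1 @ replicate (2 * s' + 0) e = u @ replicate L e" unfolding u1_def
    using sL False by (simp add: s'_def replicate_add[symmetric])
  ultimately show ?thesis using core[OF u1 e, of 0 s'] by simp
qed

lemma reach_block:
  assumes "reach a b u t" "set u \<subseteq> {a,b}" "e \<in> {a,b}"
  shows "reach a b (u @ replicate L e) (t + nb L)"
proof (induction L rule: less_induct)
  case (less L)
  show ?case
  proof (cases "L = 0")
    case True thus ?thesis using assms by simp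
  next
    case False
    have r: "reach a b (u @ replicate (L div 2) e) (t + nb (L div 2))" using less.IH[of "L div 2"] False by simp
    have g: "grow_step (shp (u @ replicate (L div 2) e)) (shp (u @ replicate L e))"
      using step2[OF assms(2,3), of "L div 2" L] False by simp
    have "reach a b (u @ replicate L e) (Suc (t + nb (L div 2)))"
    proof -
      have "set (u @ replicate L e) \<subseteq> {a,b}" using assms by auto
      thus ?thesis by (rule reach_step[OF r g])
    qed
    thus ?thesis using False by (simp add: nb_pos)
  qed
qed

lemma grow_word:
  "set w \<subseteq> {a,b} \<Longrightarrow> length w \<le> N \<Longrightarrow> \<exists>t. reach a b w t \<and> t \<le> (Tn w + 1) * nb N"
proof (induction "length w" arbitrary: w rule: less_induct)
  case less
  show ?case
  proof (cases "w = []")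
    case True thus ?thesis using reach0[of a b] by (intro exI[of _ 0]) simp
  next
    case False
    then obtain u L where uL: "w = u @ replicate L (last w)" "0 < L" "u = [] \<or> last u \<noteq> last w"
      using decomp by blast
    have e: "last w \<in> {a,b}" using subsetD[OF less.prems(1) last_in_set[OF False]] .
    have su: "set u \<subseteq> {a,b}" using less.prems uL(1) by (metis le_sup_iff set_append)
    have lu: "length u < length w" "L \<le> N" using uL(1,2) less.prems(2)
      by (metis add_less_cancel_left length_append length_replicate less_add_same_cancel1,
          metis le_add2 length_append length_replicate order_trans)
    have nbL: "nb L \<le> nb N" using nb_mono lu(2) by simp
    show ?thesis
    proof (cases "u = []")
      case True
      have "reach a b (u @ replicate L (last w)) (0 + nb L)"
        using reach_block[OF reach0[of a b] _ e, of L] su True by simp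
      thus ?thesis using uL(1) nbL by (intro exI[of _ "0 + nb L"]) auto
    next
      case uNE: False
      obtain t where t: "reach a b u t" "t \<le> (Tn u + 1) * nb N"
        using less.hyps[OF lu(1) su] lu less.prems(2) by auto
      have "reach a b (u @ replicate L (last w)) (t + nb L)" using reach_block[OF t(1) su e] .
      moreover have "Tn u + 1 \<le> Tn w" using Tn_app[OF uNE _ uL(2)] uL uNE by metis
      hence "(Tn u + 1) * nb N + nb N \<le> (Tn w + 1) * nb N"
        by (metis add_mult_distrib mult_1 add_le_mono1 mult_le_mono1)
      hence "t + nb L \<le> (Tn w + 1) * nb N" using t(2) nbL by linarith
      ultimately show ?thesis using uL(1) by auto
    qed
  qed
qed

lemma ab_comp: "\<bar>fst (a + b)\<bar> = 1 \<and> \<bar>snd (a + b)\<bar> = 1"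
  using a b ab by (auto simp: cardinal_dirs_def inner_pt_def)

lemma gadj_g: "gadj x y \<Longrightarrow> \<bar>g x - g y\<bar> = 1"
proof -
  assume h: "gadj x y"
  define A where "A = fst (a + b)"
  define B where "B = snd (a + b)"
  have AB: "A = 1 \<or> A = -1" "B = 1 \<or> B = -1" using ab_comp unfolding A_def B_def by auto
  have "g x - g y = (fst x - fst y) * A + (snd x - snd y) * B"
    unfolding gg_def inner_pt_def A_def B_def by (simp add: algebra_simps)
  moreover have "\<bar>fst x - fst y\<bar> + \<bar>snd x - snd y\<bar> = 1" using h unfolding gadj_def .
  ultimately show ?thesis using AB by (elim disjE) (simp_all, arith+)
qed

lemma shp_AC:
  assumes w: "set w \<subseteq> {a,b}"
  shows "AC (shp w) = shp w"
proof -
  have "{{x,y} | x y. x \<in> fst (shp w) \<and> y \<in> fst (shp w) \<and> gadj x y} \<subseteq> snd (shp w)"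
  proof (rule subsetI)
    fix e assume "e \<in> {{x,y} | x y. x \<in> fst (shp w) \<and> y \<in> fst (shp w) \<and> gadj x y}"
    then obtain j k where e: "e = {psum w j, psum w k}" "j \<le> length w" "k \<le> length w"
      "gadj (psum w j) (psum w k)"
      unfolding shp_def by auto
    have gj: "g (psum w j) = int j" "g (psum w k) = int k" using g_psum[OF w] e by auto
    have "\<bar>int j - int k\<bar> = 1" using gadj_g[OF e(4)] gj by simp
    hence "k = Suc j \<or> j = Suc k" by arith
    thus "e \<in> snd (shp w)"
    proof
      assume "k = Suc j" thus ?thesis using e unfolding shp_def by auto
    next
      assume "j = Suc k" thus ?thesis using e unfolding shp_def by (auto simp: insert_commute)
    qed
  qed
  thus ?thesis unfolding AC_def by (simp add: Un_absorb2)
qed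

lemma reach_grows:
  assumes "reach a b w t" and te: "translate_eq (shp w) S"
  shows "grows_conn single_node S t \<and> grows_adj single_node S t"
proof -
  obtain ws where ws: "ws 0 = []" "ws t = w" "\<forall>i\<le>t. set (ws i) \<subseteq> {a,b}"
    "\<forall>i<t. grow_step (shp (ws i)) (shp (ws (Suc i)))" using assms(1) unfolding reach_def by blast
  have sn: "shp [] = single_node" unfolding shp_def single_node_def psum_def by (auto simp: zero_prod_def)
  have "grows_conn single_node S t" unfolding grows_conn_def
    using ws sn te by (intro exI[of _ "\<lambda>i. shp (ws i)"]) auto
  moreover have "grows_adj single_node S t" unfolding grows_adj_def
  proof (intro exI[of _ "\<lambda>i. shp (ws i)"] conjI allI impI)
    fix i assume i: "i < t"
    have "AC (shp (ws i)) = shp (ws i)" using shp_AC ws(3) i by simp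
    thus "grow_step (if i = 0 then shp (ws 0) else AC (shp (ws i))) (shp (ws (Suc i)))"
      using ws(4) i by simp
  qed (use ws sn te in auto)
  ultimately show ?thesis ..
qed

end

lemma log_bound: "real (nb m) \<le> 1 + log 2 (real (Suc m))"
proof (cases "m = 0")
  case True thus ?thesis by simp
next
  case False
  have "2 ^ nb m \<le> 2 * Suc m" using nb_pow[OF False] by simp
  hence "real (2 ^ nb m) \<le> real (2 * Suc m)" by (simp only: of_nat_le_iff)
  hence "(2::real) ^ nb m \<le> 2 * real (Suc m)" by simp
  hence "log 2 ((2::real) ^ nb m) \<le> log 2 (2 * real (Suc m))" by (subst log_le_cancel_iff) auto
  moreover have "log 2 ((2::real) ^ nb m) = real (nb m)" by simp
  moreover have "log 2 (2 * real (Suc m)) = 1 + log 2 (real (Suc m))" by (subst log_mult) auto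
  ultimately show ?thesis by simp
qed

theorem corollary5p1:
  fixes c :: nat
  shows "\<exists>C::real. \<forall>(S::shape) (ps::pt list).
           staircase S ps \<and> card (turning_points ps) \<le> c \<longrightarrow>
             (\<exists>t. grows_conn single_node S t \<and> real t \<le> C * (1 + log 2 (real (card (fst S))))) \<and>
             (\<exists>t. grows_adj single_node S t \<and> real t \<le> C * (1 + log 2 (real (card (fst S)))))"
proof (intro exI[of _ "real c"] allI impI)
  fix S :: shape and ps :: "pt list"
  assume H: "staircase S ps \<and> card (turning_points ps) \<le> c"
  have pl: "path_listing S ps" using H unfolding staircase_def by blast
  obtain a b where a: "a \<in> cardinal_dirs" and b: "b \<in> cardinal_dirs" and ab: "inner_pt a b = 0"
    and st: "\<forall>i. Suc i < length ps \<longrightarrow> ps ! Suc i - ps ! i \<in> {a, b}"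
    using H unfolding staircase_def by blast
  interpret stair a b using a b ab by unfold_locales
  have ne: "ps \<noteq> []" and dist: "distinct ps" and fS: "fst S = set ps"
    and sS: "snd S = {{ps ! i, ps ! Suc i} | i. Suc i < length ps}" using pl unfolding path_listing_def by auto
  define m where "m = length ps - 1"
  have lps: "length ps = Suc m" using ne m_def by simp
  define w where "w = map (\<lambda>i. ps ! Suc i - ps ! i) [0..<m]"
  have lw: "length w = m" by (simp add: w_def)
  have wn: "\<And>i. i < m \<Longrightarrow> w ! i = ps ! Suc i - ps ! i" by (simp add: w_def)
  have sw: "set w \<subseteq> {a,b}" using st lps unfolding w_def by auto
  have ps_eq: "\<And>k. k \<le> m \<Longrightarrow> psum w k = ps ! k - ps ! 0"
  proof -
    fix k show "k \<le> m \<Longrightarrow> psum w k = ps ! k - ps ! 0"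
    proof (induction k)
      case 0 thus ?case by (simp add: psum_def)
    next
      case (Suc k)
      hence "k < length w" using lw by simp
      hence "psum w (Suc k) = psum w k + w ! k" unfolding psum_def by (simp add: take_Suc_conv_app_nth)
      thus ?case using Suc wn[of k] by (simp add: algebra_simps)
    qed
  qed
  have fshp: "fst (shp w) = psum w ` {..m}" unfolding shp_def lw by auto
  have sshp: "snd (shp w) = (\<lambda>k. {psum w k, psum w (Suc k)}) ` {..<m}" unfolding shp_def lw by auto
  have tr: "translate_eq (shp w) S"
    unfolding translate_eq_def
  proof (intro exI[of _ "ps ! 0"] conjI)
    have "(\<lambda>x. x + ps ! 0) ` fst (shp w) = (\<lambda>k. ps ! k) ` {..m}"
      unfolding fshp image_image using ps_eq by (intro image_cong) simp_all
    also have "\<dots> = set ps" using lps by (auto simp: set_conv_nth less_Suc_eq_le)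
    finally show "fst S = (\<lambda>x. x + ps ! 0) ` fst (shp w)" using fS by simp
  next
    have "(\<lambda>e. (\<lambda>x. x + ps ! 0) ` e) ` snd (shp w) = (\<lambda>k. {ps ! k, ps ! Suc k}) ` {..<m}"
      unfolding sshp image_image using ps_eq by (intro image_cong) simp_all
    also have "\<dots> = snd S" unfolding sS using lps by auto
    finally show "snd S = (\<lambda>e. (\<lambda>x. x + ps ! 0) ` e) ` snd (shp w)" by simp
  qed
  have cardS: "card (fst S) = Suc m" using fS dist lps by (simp add: distinct_card)
  define TS where "TS = {i. 0 < i \<and> i < length w \<and> w ! (i - 1) \<noteq> w ! i}"
  have sub: "insert 0 TS \<subseteq> turning_points ps"
  proof
    fix i assume "i \<in> insert 0 TS"
    thus "i \<in> turning_points ps"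
    proof
      assume "i = 0" thus ?thesis unfolding turning_points_def using lps by simp
    next
      assume "i \<in> TS"
      hence i: "0 < i" "i < m" "w ! (i - 1) \<noteq> w ! i" unfolding TS_def lw by auto
      have w1: "w ! (i - 1) = ps ! i - ps ! (i - 1)" using wn[of "i - 1"] i by simp
      have w2: "w ! i = ps ! Suc i - ps ! i" using wn i by simp
      have l1: "i - 1 < length w" "i < length w" using i lw by auto
      have m1: "w ! (i - 1) \<in> {a,b}" using subsetD[OF sw nth_mem[OF l1(1)]] .
      have m2: "w ! i \<in> {a,b}" using subsetD[OF sw nth_mem[OF l1(2)]] .
      have "inner_pt (- (w ! (i - 1))) (w ! i) = 0"
        using m1 m2 i(3) ab inner_comm[of a b] by (auto simp: inner_minus)
      moreover have "ps ! (i - 1) - ps ! i = - (w ! (i - 1))" using w1 by simp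
      ultimately have "inner_pt (ps ! (i - 1) - ps ! i) (ps ! Suc i - ps ! i) = 0" using w2 by simp
      thus ?thesis unfolding turning_points_def using i lps by simp
    qed
  qed
  have fin: "finite (turning_points ps)"
    by (rule finite_subset[of _ "{..<length ps}"]) (auto simp: turning_points_def)
  have "0 \<notin> TS" unfolding TS_def by simp
  hence "Tn w + 1 = card (insert 0 TS)" unfolding Tn_def TS_def[symmetric]
    using finite_subset[OF sub fin] by simp
  also have "\<dots> \<le> card (turning_points ps)" by (rule card_mono[OF fin sub])
  finally have Tc: "Tn w + 1 \<le> c" using H by simp
  obtain t where t: "reach a b w t" "t \<le> (Tn w + 1) * nb m" using grow_word[OF sw, of m] lw by auto
  have "t \<le> c * nb m" using t(2) Tc by (meson le_trans mult_le_mono1)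
  hence "real t \<le> real c * real (nb m)" by (metis of_nat_le_iff of_nat_mult)
  also have "\<dots> \<le> real c * (1 + log 2 (real (Suc m)))" by (rule mult_left_mono[OF log_bound]) simp
  finally have bd: "real t \<le> real c * (1 + log 2 (real (card (fst S))))" using cardS by simp
  show "(\<exists>t. grows_conn single_node S t \<and> real t \<le> real c * (1 + log 2 (real (card (fst S))))) \<and>
        (\<exists>t. grows_adj single_node S t \<and> real t \<le> real c * (1 + log 2 (real (card (fst S)))))"
    using reach_grows[OF t(1) tr] bd by blast
qed

end
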